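(* Let $X$ be a $\mathbf D([0,1),E)$-valued random element whose jump positions $0<Y_1<\dots<Y_{N_X}<1$ form a homogeneous Poisson point process on $[0,1)$ of intensity $\lambda>0$. Let $k\ge1$ and $(I_1,\dots,I_k)\in\mathrm{im}(\pi_k)$. Conditionally on the event $\{N_X=k,\ \pi_k(Y_1,\dots,Y_k)=(I_1,\dots,I_k)\}$, the vector $(Y_1,\dots,Y_k)$ has the same distribution as $(U_1,\dots,U_k)$, where $U_1,\dots,U_k$ are independent and $U_i$ is uniformly distributed on $I_i$.
   Context: $\mathbf D([0,1),E)$ is the space of piecewise constant functions $[0,1)\to E$ with finitely many jumps. Dyadic intervals of level $m$: $[(j-1)2^{-m},j2^{-m})$, $j=1,\dots,2^m$. For distinct $t_1,\dots,t_k\in[0,1)$ build a finite binary tree: the root is $[0,1)$; a node $I$ (a dyadic interval of level $m$) containing at least two of the points $t_i$ gets as children the two dyadic intervals of level $m+1$ contained in $I$; a node containing $0$ or $1$ of the points is a leaf. $\pi_k(t_1,\dots,t_k)=(I_1,\dots,I_k)$ is the list of the $k$ leaves containing exactly one point, arranged in their natural left-to-right order; $\mathrm{im}(\pi_k)$ is the set of all such lists. *)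

theory Defs
  imports "HOL-Probability.Probability"
begin

text \<open>Piecewise constant functions on [0,1) with finitely many jumps: the space D([0,1),E).
  Only the restriction to [0,1) matters.\<close>
definition Dspace :: "(real \<Rightarrow> 'e) set" where
  "Dspace = {f. \<exists>S. finite S \<and> S \<subseteq> {0<..<1} \<and>
      (\<forall>s t. 0 \<le> s \<and> s \<le> t \<and> t < 1 \<and> S \<inter> {s<..t} = {} \<longrightarrow> f s = f t)}"

definition jumps :: "(real \<Rightarrow> 'e) \<Rightarrow> real set" where
  "jumps f = {t \<in> {0<..<1}. \<forall>e>0. \<exists>s. t - e < s \<and> s < t \<and> f s \<noteq> f t}"

text \<open>Number of jumps N_X and the ordered jump positions Y_1 < ... < Y_{N_X}
  (as a 0-indexed list).\<close>
definition njumps :: "(real \<Rightarrow> 'e) \<Rightarrow> nat" where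
  "njumps f = card (jumps f)"

definition jump_list :: "(real \<Rightarrow> 'e) \<Rightarrow> real list" where
  "jump_list f = sorted_list_of_set (jumps f)"

definition dyadic :: "nat \<Rightarrow> nat \<Rightarrow> real set" where
  "dyadic m j = {(real j - 1) / 2 ^ m ..< real j / 2 ^ m}"

definition is_dyadic :: "nat \<Rightarrow> real set \<Rightarrow> bool" where
  "is_dyadic m I \<longleftrightarrow> (\<exists>j. 1 \<le> j \<and> j \<le> 2 ^ m \<and> I = dyadic m j)"

text \<open>Nodes of the binary tree built from the points ts: the root [0,1) is a node, and
  a dyadic interval of level m+1 is a node iff its parent (the level-m dyadic interval
  containing it) is a node containing at least two of the points. Unfolded: a dyadic
  interval of level m is a node iff every dyadic interval of strictly smaller level
  containing it contains at least two of the points.\<close>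
definition tree_node :: "real list \<Rightarrow> real set \<Rightarrow> bool" where
  "tree_node ts I \<longleftrightarrow> (\<exists>m. is_dyadic m I \<and>
      (\<forall>m' J. m' < m \<and> is_dyadic m' J \<and> I \<subseteq> J \<longrightarrow> 2 \<le> card (set ts \<inter> J)))"

text \<open>Leaves containing exactly one point (a node with exactly one point is a leaf).\<close>
definition one_point_leaves :: "real list \<Rightarrow> real set set" where
  "one_point_leaves ts = {I. tree_node ts I \<and> card (set ts \<inter> I) = 1}"

definition pi_k :: "nat \<Rightarrow> real list \<Rightarrow> real set list" where
  "pi_k k ts = (THE L. distinct L \<and> set L = one_point_leaves ts \<and>
      sorted_wrt (\<lambda>A B. \<forall>a\<in>A. \<forall>b\<in>B. a < b) L)"

definition im_pi :: "nat \<Rightarrow> real set list set" where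
  "im_pi k = {pi_k k ts | ts. length ts = k \<and> distinct ts \<and> set ts \<subseteq> {0..<1}}"

definition poisson_pp :: "'a measure \<Rightarrow> real \<Rightarrow> ('a \<Rightarrow> real set) \<Rightarrow> bool" where
  "poisson_pp M lam P \<longleftrightarrow> prob_space M \<and>
     (\<forall>\<omega>\<in>space M. finite (P \<omega>) \<and> P \<omega> \<subseteq> {0..<1}) \<and>
     (\<forall>A\<in>sets borel. A \<subseteq> {0..<1} \<longrightarrow>
        (\<lambda>\<omega>. card (P \<omega> \<inter> A)) \<in> measurable M (count_space UNIV) \<and>
        (\<forall>n. measure M {\<omega>\<in>space M. card (P \<omega> \<inter> A) = n} =
              (lam * measure lborel A) ^ n / fact n * exp (- lam * measure lborel A))) \<and>
     (\<forall>(As :: nat \<Rightarrow> real set) n. (\<forall>i<n. As i \<in> sets borel \<and> As i \<subseteq> {0..<1}) \<and>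
        disjoint_family_on As {..<n} \<longrightarrow>
        prob_space.indep_vars M (\<lambda>_. count_space UNIV) (\<lambda>i \<omega>. card (P \<omega> \<inter> As i)) {..<n})"

end

theory Submission
  imports Defs
begin


definition DD :: "nat \<Rightarrow> real \<Rightarrow> real set" where
  "DD m t = {y. \<lfloor>y * 2^m\<rfloor> = \<lfloor>t * 2^m\<rfloor>}"

lemma DD_self[simp]: "x \<in> DD m x" by (simp add: DD_def)

lemma DD_mem_iff: "x \<in> DD m t \<longleftrightarrow> DD m x = DD m t"
  by (auto simp: DD_def)

lemma DD_sym: "x \<in> DD m t \<longleftrightarrow> t \<in> DD m x"
  by (auto simp: DD_def)

lemma floor_level:
  assumes "m \<le> m'"
  shows "\<lfloor>(y::real) * 2^m\<rfloor> = \<lfloor>y * 2^m'\<rfloor> div 2^(m'-m)"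
proof -
  have "(2::real)^m' = 2^m * 2^(m'-m)" using assms by (simp flip: power_add)
  then have "y * 2^m = y * 2^m' / real_of_int (2^(m'-m))"
    by simp
  then show ?thesis by (simp add: floor_divide_real_eq_div del: of_int_power)
qed

lemma DD_mono: "m \<le> m' \<Longrightarrow> DD m' t \<subseteq> DD m t"
  unfolding DD_def using floor_level by auto

lemma DD_interval: "DD m t = {real_of_int \<lfloor>t*2^m\<rfloor> / 2^m ..< (real_of_int \<lfloor>t*2^m\<rfloor> + 1) / 2^m}"
proof (rule set_eqI)
  fix y
  have p: "(0::real) < 2^m" by simp
  have "y \<in> DD m t \<longleftrightarrow> real_of_int \<lfloor>t*2^m\<rfloor> \<le> y * 2^m \<and> y*2^m < real_of_int \<lfloor>t*2^m\<rfloor> + 1"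
    unfolding DD_def by (simp add: floor_eq_iff)
  also have "\<dots> \<longleftrightarrow> y \<in> {real_of_int \<lfloor>t*2^m\<rfloor> / 2^m ..< (real_of_int \<lfloor>t*2^m\<rfloor> + 1) / 2^m}"
    unfolding atLeastLessThan_iff pos_divide_le_eq[OF p] pos_less_divide_eq[OF p] ..
  finally show "y \<in> DD m t \<longleftrightarrow> y \<in> {real_of_int \<lfloor>t*2^m\<rfloor> / 2^m ..< (real_of_int \<lfloor>t*2^m\<rfloor> + 1) / 2^m}" .
qed

lemma DD_dyadic:
  assumes "0 \<le> t" "t < 1"
  shows "is_dyadic m (DD m t)"
proof -
  define c where "c = \<lfloor>t*2^m\<rfloor>"
  have c0: "0 \<le> c" using assms by (simp add: c_def)
  have "t * 2^m < 2^m" using assms by simp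
  then have c1: "c < 2^m" unfolding c_def floor_less_iff by simp
  define j where "j = nat c + 1"
  have jc: "int j = c + 1" using c0 by (simp add: j_def)
  then have "real j = real_of_int c + 1" by (metis of_int_of_nat_eq of_int_add of_int_1)
  then have "real j - 1 = real_of_int c" "real j = real_of_int c + 1" by simp_all
  then have "DD m t = dyadic m j"
    unfolding DD_interval dyadic_def c_def[symmetric] by simp
  moreover have "1 \<le> j" unfolding j_def by simp
  moreover have "int j \<le> 2^m" using jc c1 by simp
  then have "j \<le> 2^m" by (metis of_nat_le_iff of_nat_numeral of_nat_power)
  ultimately show ?thesis unfolding is_dyadic_def by blast
qed

lemma dyadic_DD:
  assumes "is_dyadic m I" "t \<in> I"
  shows "I = DD m t"
proof -
  obtain j where j: "1 \<le> j" "I = dyadic m j" using assms unfolding is_dyadic_def by blast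
  have "(real j - 1) \<le> t * 2^m \<and> t * 2^m < real j" using assms(2) j
    by (auto simp: dyadic_def field_simps)
  then have "\<lfloor>t*2^m\<rfloor> = int j - 1" by (simp add: floor_eq_iff)
  then have fl: "real_of_int \<lfloor>t*2^m\<rfloor> = real j - 1" by simp
  show ?thesis using j unfolding DD_interval fl dyadic_def by simp
qed

lemma DD_separate:
  assumes "s \<noteq> t"
  shows "\<exists>m. s \<notin> DD m t"
proof -
  obtain m where m: "(1/2::real)^m < \<bar>s - t\<bar>"
    using real_arch_pow_inv[of "\<bar>s - t\<bar>" "1/2"] assms by auto
  have "s \<notin> DD m t"
  proof
    assume "s \<in> DD m t"
    then have "\<lfloor>s*2^m\<rfloor> = \<lfloor>t*2^m\<rfloor>" unfolding DD_def by simp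
    then have "real_of_int \<lfloor>s*2^m\<rfloor> = real_of_int \<lfloor>t*2^m\<rfloor>" by simp
    moreover have "real_of_int \<lfloor>s*2^m\<rfloor> \<le> s*2^m" "s*2^m < real_of_int \<lfloor>s*2^m\<rfloor> + 1"
      "real_of_int \<lfloor>t*2^m\<rfloor> \<le> t*2^m" "t*2^m < real_of_int \<lfloor>t*2^m\<rfloor> + 1"
      by (simp_all add: of_int_floor_le real_of_int_floor_add_one_gt)
    ultimately have "\<bar>s*2^m - t*2^m\<bar> < 1" unfolding abs_less_iff by linarith
    also have "s*2^m - t*2^m = (s - t) * 2^m" by (simp add: left_diff_distrib)
    finally have "\<bar>s - t\<bar> * 2^m < 1" by (simp add: abs_mult)
    then have "\<bar>s - t\<bar> < 1 / 2^m" by (simp add: pos_less_divide_eq)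
    then have "\<bar>s - t\<bar> < (1/2)^m" by (simp add: power_one_over)
    with m show False by simp
  qed
  then show ?thesis by blast
qed

lemma DD_exists_small:
  assumes "finite S"
  shows "\<exists>m. S \<inter> DD m t \<subseteq> {t}"
proof -
  have "\<forall>s\<in>S - {t}. \<exists>m. s \<notin> DD m t" using DD_separate by blast
  then obtain f where f: "\<forall>s\<in>S - {t}. s \<notin> DD (f s) t" by metis
  define m where "m = Max (insert 0 (f ` (S - {t})))"
  have "S \<inter> DD m t \<subseteq> {t}"
  proof
    fix s assume s: "s \<in> S \<inter> DD m t"
    show "s \<in> {t}"
    proof (rule ccontr)
      assume "s \<notin> {t}"
      then have "f s \<le> m" using assms s unfolding m_def by (intro Max_ge) auto
      then have "s \<in> DD (f s) t" using DD_mono s by blast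
      with f s \<open>s \<notin> {t}\<close> show False by auto
    qed
  qed
  then show ?thesis by blast
qed

definition lev :: "real set \<Rightarrow> real \<Rightarrow> nat" where
  "lev S t = (LEAST m. card (S \<inter> DD m t) \<le> 1)"

definition leaf :: "real set \<Rightarrow> real \<Rightarrow> real set" where
  "leaf S t = DD (lev S t) t"

lemma lev_card:
  assumes "finite S" "t \<in> S"
  shows "card (S \<inter> leaf S t) = 1"
proof -
  obtain m where "S \<inter> DD m t \<subseteq> {t}" using DD_exists_small assms by blast
  then have "card (S \<inter> DD m t) \<le> 1"
    using card_mono[of "{t}" "S \<inter> DD m t"] by simp
  then have "card (S \<inter> leaf S t) \<le> 1" unfolding leaf_def lev_def by (rule LeastI)
  moreover have "t \<in> S \<inter> leaf S t" using assms by (simp add: leaf_def)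
  moreover have "0 < card (S \<inter> leaf S t)" using assms(1) \<open>t \<in> S \<inter> leaf S t\<close>
    by (auto simp: card_gt_0_iff)
  ultimately show ?thesis by linarith
qed

lemma lev_below:
  assumes "m < lev S t"
  shows "2 \<le> card (S \<inter> DD m t)"
  using not_less_Least[OF assms[unfolded lev_def]] by simp

lemma leaf_single:
  assumes "finite S" "t \<in> S"
  shows "S \<inter> leaf S t = {t}"
proof -
  have "t \<in> S \<inter> leaf S t" using assms by (simp add: leaf_def)
  obtain x where x: "S \<inter> leaf S t = {x}" using lev_card[OF assms] card_1_singletonE by blast
  then show ?thesis using \<open>t \<in> S \<inter> leaf S t\<close> by auto
qed

lemma leaf_in:
  assumes "set ts \<subseteq> {0..<1}" "t \<in> set ts"
  shows "leaf (set ts) t \<in> one_point_leaves ts"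
proof -
  have "tree_node ts (leaf (set ts) t)"
    unfolding tree_node_def
  proof (intro exI conjI allI impI)
    show "is_dyadic (lev (set ts) t) (leaf (set ts) t)" unfolding leaf_def
      using assms by (intro DD_dyadic) auto
    fix m' J assume h: "m' < lev (set ts) t \<and> is_dyadic m' J \<and> leaf (set ts) t \<subseteq> J"
    then have "t \<in> J" by (auto simp: leaf_def)
    then have "J = DD m' t" using h dyadic_DD by blast
    then show "2 \<le> card (set ts \<inter> J)" using lev_below h by simp
  qed
  then show ?thesis using lev_card[OF _ assms(2)] unfolding one_point_leaves_def by simp
qed

lemma one_point_leaf_is:
  assumes "set ts \<subseteq> {0..<1}" "I \<in> one_point_leaves ts"
  shows "\<exists>t\<in>set ts. I = leaf (set ts) t"
proof -
  obtain m where m: "is_dyadic m I" and anc: "\<forall>m' J. m' < m \<and> is_dyadic m' J \<and> I \<subseteq> J \<longrightarrow> 2 \<le> card (set ts \<inter> J)"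
    and c: "card (set ts \<inter> I) = 1" using assms(2) unfolding one_point_leaves_def tree_node_def by blast
  obtain t where t: "set ts \<inter> I = {t}" using c by (meson card_1_singletonE)
  then have tS: "t \<in> set ts" and tI: "t \<in> I" by auto
  have I: "I = DD m t" using dyadic_DD m tI by blast
  have "lev (set ts) t = m" unfolding lev_def
  proof (rule Least_equality)
    show "card (set ts \<inter> DD m t) \<le> 1" using c I by simp
    fix y assume y: "card (set ts \<inter> DD y t) \<le> 1"
    show "m \<le> y"
    proof (rule ccontr)
      assume "\<not> m \<le> y"
      then have "y < m" by simp
      moreover have "is_dyadic y (DD y t)" using assms(1) tS by (intro DD_dyadic) auto
      moreover have "I \<subseteq> DD y t" using I DD_mono \<open>y < m\<close> by simp
      ultimately have "2 \<le> card (set ts \<inter> DD y t)" using anc by blast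
      with y show False by simp
    qed
  qed
  then show ?thesis using tS I by (auto simp: leaf_def)
qed

lemma leaf_inj:
  assumes "finite S" "t \<in> S" "t' \<in> S" "t' \<in> leaf S t"
  shows "t' = t"
  using leaf_single[OF assms(1,2)] assms by auto

lemma leaf_order:
  assumes "finite S" "t \<in> S" "t' \<in> S" "t < t'" "a \<in> leaf S t" "b \<in> leaf S t'"
  shows "a < b"
proof -
  define m where "m = lev S t"
  define m' where "m' = lev S t'"
  define mm where "mm = min m m'"
  have a: "a \<in> DD mm t" using assms(5) DD_mono[of mm m] by (auto simp: leaf_def m_def mm_def)
  have b: "b \<in> DD mm t'" using assms(6) DD_mono[of mm m'] by (auto simp: leaf_def m'_def mm_def)
  have le: "\<lfloor>t*2^mm\<rfloor> \<le> \<lfloor>t'*2^mm\<rfloor>" using assms(4) by (intro floor_mono) simp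
  have ne: "\<lfloor>t*2^mm\<rfloor> \<noteq> \<lfloor>t'*2^mm\<rfloor>"
  proof
    assume eq: "\<lfloor>t*2^mm\<rfloor> = \<lfloor>t'*2^mm\<rfloor>"
    show False
    proof (cases "mm = m")
      case True
      then have "t' \<in> leaf S t" using eq by (simp add: leaf_def m_def DD_def)
      then show False using leaf_inj assms by fastforce
    next
      case False
      then have "mm = m'" by (simp add: mm_def min_def split: if_splits)
      then have "t \<in> leaf S t'" using eq by (simp add: leaf_def m'_def DD_def)
      then show False using leaf_inj assms by fastforce
    qed
  qed
  have "\<lfloor>a*2^mm\<rfloor> < \<lfloor>b*2^mm\<rfloor>" using a b le ne by (simp add: DD_def)
  then have "a*2^mm < b*2^mm" by (metis floor_mono not_le)
  then show ?thesis by simp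
qed

lemma leaf_order_set:
  "x \<in> set ts \<Longrightarrow> y \<in> set ts \<Longrightarrow> x < y \<Longrightarrow> a \<in> leaf (set ts) x \<Longrightarrow> b \<in> leaf (set ts) y \<Longrightarrow> a < b"
  using leaf_order[of "set ts" x y a b] by simp

lemma sorted_wrt_unique:
  assumes "sorted_wrt R xs" "sorted_wrt R ys" "set xs = set ys" "distinct xs" "distinct ys"
    "\<And>a b. a \<in> set xs \<Longrightarrow> b \<in> set xs \<Longrightarrow> R a b \<Longrightarrow> R b a \<Longrightarrow> False"
  shows "xs = ys"
  using assms
proof (induction xs arbitrary: ys)
  case Nil then show ?case by simp
next
  case (Cons x xs)
  then obtain y ys' where ys: "ys = y # ys'" by (cases ys) auto
  show ?case
  proof (cases "x = y")
    case True
    have "set xs = set ys'" using Cons.prems ys True by (simp add: Diff_insert_absorb)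
      (metis Diff_insert_absorb)
    then show ?thesis using Cons ys True by auto
  next
    case False
    have e: "set (x#xs) = set (y#ys')" using Cons.prems ys by simp
    have "y \<in> set (x#xs)" "x \<in> set (y#ys')" by (metis e list.set_intros(1))+
    then have "y \<in> set xs" "x \<in> set ys'" using False by auto
    then have "R x y" "R y x" using Cons.prems ys by auto
    then show ?thesis using Cons.prems(6)[of x y] \<open>y \<in> set xs\<close> by auto
  qed
qed

lemma pi_k_eq:
  assumes "set ts \<subseteq> {0..<1}"
  shows "pi_k k ts = map (leaf (set ts)) (sorted_list_of_set (set ts))"
  unfolding pi_k_def
proof (rule the_equality)
  let ?S = "set ts"
  let ?L = "map (leaf ?S) (sorted_list_of_set ?S)"
  have inj: "inj_on (leaf ?S) ?S"
  proof (rule inj_onI)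
    fix x y assume xy: "x \<in> ?S" "y \<in> ?S" "leaf ?S x = leaf ?S y"
    have "x \<in> leaf ?S y" using xy(3)[symmetric] by (simp add: leaf_def)
    then show "x = y" using leaf_inj[of ?S y x] xy by simp
  qed
  have st: "sorted_wrt (<) (sorted_list_of_set ?S)" by simp
  show "distinct ?L \<and> set ?L = one_point_leaves ts \<and> sorted_wrt (\<lambda>A B. \<forall>a\<in>A. \<forall>b\<in>B. a < b) ?L"
  proof (intro conjI)
    show "distinct ?L" using inj by (simp add: distinct_map)
    show "set ?L = one_point_leaves ts"
      using leaf_in[OF assms] one_point_leaf_is[OF assms] by auto
    show "sorted_wrt (\<lambda>A B. \<forall>a\<in>A. \<forall>b\<in>B. a < b) ?L"
      unfolding sorted_wrt_map
      by (rule sorted_wrt_mono_rel[OF _ st]) (auto intro: leaf_order_set)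
  qed
  fix L assume L: "distinct L \<and> set L = one_point_leaves ts \<and> sorted_wrt (\<lambda>A B. \<forall>a\<in>A. \<forall>b\<in>B. a < b) L"
  have ne: "\<And>A. A \<in> one_point_leaves ts \<Longrightarrow> A \<noteq> {}"
    unfolding one_point_leaves_def by fastforce
  show "L = ?L"
  proof (rule sorted_wrt_unique[OF _ _ _ _ _])
    show "sorted_wrt (\<lambda>A B. \<forall>a\<in>A. \<forall>b\<in>B. a < b) L" using L by simp
    show "sorted_wrt (\<lambda>A B. \<forall>a\<in>A. \<forall>b\<in>B. a < b) ?L"
      unfolding sorted_wrt_map
      by (rule sorted_wrt_mono_rel[OF _ st]) (auto intro: leaf_order_set)
    show "set L = set ?L" using L leaf_in[OF assms] one_point_leaf_is[OF assms] by auto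
    show "distinct L" using L by simp
    show "distinct ?L" using inj by (simp add: distinct_map)
    fix A B assume "A \<in> set L" "B \<in> set L" "\<forall>a\<in>A. \<forall>b\<in>B. a < b" "\<forall>a\<in>B. \<forall>b\<in>A. a < b"
    moreover obtain a where "a \<in> A" using ne L \<open>A \<in> set L\<close> by blast
    moreover obtain b where "b \<in> B" using ne L \<open>B \<in> set L\<close> by blast
    ultimately show False by force
  qed
qed


lemma card_set_nth:
  assumes "distinct xs"
  shows "card (set xs \<inter> D) = card {j. j < length xs \<and> xs ! j \<in> D}"
proof -
  have "set xs \<inter> D = (\<lambda>j. xs ! j) ` {j. j < length xs \<and> xs ! j \<in> D}"
    by (auto simp: in_set_conv_nth)
  moreover have "inj_on (\<lambda>j. xs ! j) {j. j < length xs \<and> xs ! j \<in> D}"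
    using assms by (auto simp: inj_on_def nth_eq_iff_index_eq)
  ultimately show ?thesis by (simp add: card_image)
qed

lemma leaf_transfer:
  assumes s: "distinct s" "length s = k" and t: "distinct t" "length t = k"
    and fin: "finite (set t)"
    and hyp: "\<forall>j<k. s ! j \<in> leaf (set t) (t ! j)"
    and i: "i < k"
  shows "leaf (set s) (s ! i) = leaf (set t) (t ! i)"
proof -
  let ?S = "set s" and ?T = "set t"
  define L where "L = lev ?T (t ! i)"
  have tin: "\<And>j. j < k \<Longrightarrow> t ! j \<in> ?T" using t by auto
  have tinj: "\<And>j. j < k \<Longrightarrow> t ! j = t ! i \<Longrightarrow> j = i" using t i by (simp add: nth_eq_iff_index_eq)
  have memb: "s ! j \<in> DD m' (t ! i) \<longleftrightarrow> t ! j \<in> DD m' (t ! i)" if m': "m' \<le> L" and j: "j < k" for m' j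
  proof -
    define Lj where "Lj = lev ?T (t ! j)"
    have sj: "s ! j \<in> DD Lj (t ! j)" using hyp j by (simp add: leaf_def Lj_def)
    show ?thesis
    proof (cases "m' \<le> Lj")
      case True
      then have "s ! j \<in> DD m' (t ! j)" using sj DD_mono by blast
      then have "DD m' (s ! j) = DD m' (t ! j)" using DD_mem_iff by blast
      then show ?thesis using DD_mem_iff by metis
    next
      case False
      show ?thesis
      proof (cases "j = i")
        case True
        have "s ! i \<in> DD L (t ! i)" using hyp i by (simp add: leaf_def L_def)
        then have "s ! i \<in> DD m' (t ! i)" using DD_mono m' by blast
        then show ?thesis using True by simp
      next
        case ji: False
        have n1: "t ! j \<notin> DD m' (t ! i)"
        proof
          assume "t ! j \<in> DD m' (t ! i)"
          then have "t ! i \<in> DD m' (t ! j)" using DD_sym by blast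
          then have "t ! i \<in> leaf ?T (t ! j)" using DD_mono[of Lj m'] False by (auto simp: leaf_def Lj_def)
          then have "t ! i = t ! j" using leaf_inj[OF fin tin[OF j] tin[OF i]] by simp
          then show False using tinj[OF j] ji by simp
        qed
        have n2: "s ! j \<notin> DD m' (t ! i)"
        proof
          assume "s ! j \<in> DD m' (t ! i)"
          then have "s ! j \<in> DD Lj (t ! i)" using DD_mono[of Lj m'] False by auto
          then have "DD Lj (t ! i) = DD Lj (t ! j)" using sj DD_mem_iff by metis
          then have "t ! i \<in> DD Lj (t ! j)" by (metis DD_self)
          then have "t ! i \<in> leaf ?T (t ! j)" by (simp add: leaf_def Lj_def)
          then have "t ! i = t ! j" using leaf_inj[OF fin tin[OF j] tin[OF i]] by simp
          then show False using tinj[OF j] ji by simp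
        qed
        show ?thesis using n1 n2 by simp
      qed
    qed
  qed
  have cards: "card (?S \<inter> DD m' (t ! i)) = card (?T \<inter> DD m' (t ! i))" if m': "m' \<le> L" for m'
  proof -
    have "{j. j < length s \<and> s ! j \<in> DD m' (t ! i)} = {j. j < length t \<and> t ! j \<in> DD m' (t ! i)}"
      using memb[OF m'] s t by auto
    then show ?thesis using card_set_nth[OF s(1)] card_set_nth[OF t(1)] by metis
  qed
  have sL: "s ! i \<in> DD L (t ! i)" using hyp i by (simp add: leaf_def L_def)
  have DDeq: "DD m' (s ! i) = DD m' (t ! i)" if "m' \<le> L" for m'
    using DD_mono[OF that] sL DD_mem_iff by blast
  have levS: "lev ?S (s ! i) = L" unfolding lev_def
  proof (rule Least_equality)
    have "card (?T \<inter> DD L (t ! i)) = 1" using lev_card[OF fin tin[OF i]] by (simp add: leaf_def L_def)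
    then show "card (?S \<inter> DD L (s ! i)) \<le> 1" using cards DDeq by simp
    fix y assume y: "card (?S \<inter> DD y (s ! i)) \<le> 1"
    show "L \<le> y"
    proof (rule ccontr)
      assume "\<not> L \<le> y"
      then have yL: "y < L" by simp
      then have "2 \<le> card (?T \<inter> DD y (t ! i))" using lev_below L_def by simp
      then show False using y cards[of y] DDeq[of y] yL by simp
    qed
  qed
  show ?thesis unfolding leaf_def levS using DDeq[of L] by (simp add: L_def)
qed

lemma pi_char:
  assumes T: "set ts \<subseteq> {0..<1}" "distinct ts" "length ts = k"
    and S: "finite S" "S \<subseteq> {0..<1}" "card S = k"
  shows "pi_k k (sorted_list_of_set S) = pi_k k ts \<longleftrightarrow>
         (\<forall>i<k. sorted_list_of_set S ! i \<in> pi_k k ts ! i)"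
proof -
  define s where "s = sorted_list_of_set S"
  define t where "t = sorted_list_of_set (set ts)"
  have ss: "set s = S" "distinct s" "length s = k" using S by (auto simp: s_def)
  have tt: "set t = set ts" "distinct t" "length t = k"
    using T by (auto simp: t_def distinct_card)
  have pT: "pi_k k ts = map (leaf (set t)) t" using pi_k_eq[OF T(1)] tt by (simp add: t_def)
  have pS: "pi_k k s = map (leaf (set s)) s" using pi_k_eq[of s k] ss(1) S(2) unfolding ss(1) by (simp add: s_def)
  show ?thesis unfolding s_def[symmetric]
  proof
    assume h: "pi_k k s = pi_k k ts"
    show "\<forall>i<k. s ! i \<in> pi_k k ts ! i"
    proof (intro allI impI)
      fix i assume i: "i < k"
      have "pi_k k ts ! i = leaf (set s) (s ! i)" using h pS ss i by (metis nth_map)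
      then show "s ! i \<in> pi_k k ts ! i" by (simp add: leaf_def)
    qed
  next
    assume h: "\<forall>i<k. s ! i \<in> pi_k k ts ! i"
    then have h': "\<forall>j<k. s ! j \<in> leaf (set t) (t ! j)" using pT tt by simp
    show "pi_k k s = pi_k k ts" unfolding pS pT
      using leaf_transfer[OF ss(2,3) tt(2,3) _ h'] ss tt by (intro nth_equalityI) auto
  qed
qed



lemma nth_beyond: "length xs \<le> i \<Longrightarrow> xs ! i = [] ! (i - length xs)"
proof (induction xs arbitrary: i)
  case Nil then show ?case by simp
next
  case (Cons x xs)
  then obtain i' where i: "i = Suc i'" by (cases i) auto
  then show ?case using Cons by simp
qed

lemma sorted_nth_le_iff:
  fixes P :: "real set"
  assumes "finite P" "i < card P"
  shows "sorted_list_of_set P ! i \<le> a \<longleftrightarrow> Suc i \<le> card (P \<inter> {..a})"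
proof -
  define s where "s = sorted_list_of_set P"
  have s: "set s = P" "distinct s" "sorted s" "length s = card P" using assms by (auto simp: s_def)
  have c: "card (P \<inter> {..a}) = card {j. j < length s \<and> s ! j \<in> {..a}}"
    using card_set_nth[OF s(2)] s(1) by simp
  show ?thesis unfolding s_def[symmetric] c
  proof
    assume h: "s ! i \<le> a"
    have "{..i} \<subseteq> {j. j < length s \<and> s ! j \<in> {..a}}"
      using h s assms(2) sorted_nth_mono[OF s(3)] by (auto intro: order_trans)
    then have "card {..i} \<le> card {j. j < length s \<and> s ! j \<in> {..a}}"
      by (intro card_mono) auto
    then show "Suc i \<le> card {j. j < length s \<and> s ! j \<in> {..a}}" by simp
  next
    assume h: "Suc i \<le> card {j. j < length s \<and> s ! j \<in> {..a}}"
    show "s ! i \<le> a"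
    proof (rule ccontr)
      assume na: "\<not> s ! i \<le> a"
      have "{j. j < length s \<and> s ! j \<in> {..a}} \<subseteq> {..<i}"
      proof (intro subsetI)
        fix j assume j: "j \<in> {j. j < length s \<and> s ! j \<in> {..a}}"
        show "j \<in> {..<i}"
        proof (rule ccontr)
          assume "j \<notin> {..<i}"
          then have "i \<le> j" by simp
          then have "s ! i \<le> s ! j" using sorted_nth_mono[OF s(3)] j by blast
          then show False using j na by simp
        qed
      qed
      then have "card {j. j < length s \<and> s ! j \<in> {..a}} \<le> card {..<i}"
        by (intro card_mono) auto
      with h show False by simp
    qed
  qed
qed

lemma sorted_counts:
  fixes P :: "real set" and B :: "nat \<Rightarrow> real set"
  assumes fin: "finite P" and P01: "P \<subseteq> {0..<1}"
    and ord: "\<And>i j a b. i < j \<Longrightarrow> j < k \<Longrightarrow> a \<in> B i \<Longrightarrow> b \<in> B j \<Longrightarrow> a < b"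
  shows "(card P = k \<and> (\<forall>i<k. sorted_list_of_set P ! i \<in> B i)) \<longleftrightarrow>
         ((\<forall>i<k. card (P \<inter> B i) = 1) \<and> card (P \<inter> ({0..<1} - (\<Union>i<k. B i))) = 0)"
proof
  assume h: "card P = k \<and> (\<forall>i<k. sorted_list_of_set P ! i \<in> B i)"
  define s where "s = sorted_list_of_set P"
  have s: "set s = P" "distinct s" "length s = k" using fin h by (auto simp: s_def)
  have sB: "\<And>i. i < k \<Longrightarrow> s ! i \<in> B i" using h by (simp add: s_def)
  have uniq: "j = i" if "i < k" "j < k" "x \<in> B i" "x \<in> B j" for i j x
    using ord[of i j x x] ord[of j i x x] that by (cases i j rule: linorder_cases) auto
  have single: "P \<inter> B i = {s ! i}" if i: "i < k" for i
  proof
    show "P \<inter> B i \<subseteq> {s ! i}"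
    proof
      fix x assume x: "x \<in> P \<inter> B i"
      then obtain j where j: "j < k" "x = s ! j" using s by (auto simp: in_set_conv_nth)
      then have "j = i" using uniq[OF i j(1)] x sB by auto
      then show "x \<in> {s ! i}" using j by simp
    qed
    show "{s ! i} \<subseteq> P \<inter> B i" using sB i s by auto
  qed
  have "P \<inter> ({0..<1} - (\<Union>i<k. B i)) = {}"
  proof -
    { fix x assume x: "x \<in> P" "x \<notin> (\<Union>i<k. B i)"
      then obtain j where j: "j < k" "x = s ! j" using s by (auto simp: in_set_conv_nth)
      then have False using sB[OF j(1)] x by auto }
    then show ?thesis by blast
  qed
  then show "(\<forall>i<k. card (P \<inter> B i) = 1) \<and> card (P \<inter> ({0..<1} - (\<Union>i<k. B i))) = 0"
    using single by simp
next
  assume h: "(\<forall>i<k. card (P \<inter> B i) = 1) \<and> card (P \<inter> ({0..<1} - (\<Union>i<k. B i))) = 0"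
  have "P \<inter> ({0..<1} - (\<Union>i<k. B i)) = {}" using h fin by simp
  then have Pcov: "P \<subseteq> (\<Union>i<k. B i)" using P01 by blast
  have "\<forall>i<k. \<exists>x. P \<inter> B i = {x}"
  proof (intro allI impI)
    fix i assume "i < k"
    then have "card (P \<inter> B i) = 1" using h by simp
    then show "\<exists>x. P \<inter> B i = {x}" by (rule card_1_singletonE) blast
  qed
  then have "\<exists>p. \<forall>i<k. P \<inter> B i = {p i}" by (simp add: choice_iff')
  then obtain p where p: "\<And>i. i < k \<Longrightarrow> P \<inter> B i = {p i}" by blast
  have pB: "\<And>i. i < k \<Longrightarrow> p i \<in> B i" "\<And>i. i < k \<Longrightarrow> p i \<in> P" using p by blast+
  have Peq: "P = p ` {..<k}"
  proof
    show "P \<subseteq> p ` {..<k}"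
    proof
      fix x assume x: "x \<in> P"
      then obtain i where i: "i < k" "x \<in> B i" using Pcov by blast
      then have "x = p i" using p[OF i(1)] x by blast
      then show "x \<in> p ` {..<k}" using i by simp
    qed
    show "p ` {..<k} \<subseteq> P" using pB by auto
  qed
  have pmono: "p i < p j" if "i < j" "j < k" for i j
    using ord[of i j "p i" "p j"] pB(1)[of i] pB(1)[of j] that by simp
  have inj: "inj_on p {..<k}"
  proof (rule inj_onI)
    fix i j assume ij: "i \<in> {..<k}" "j \<in> {..<k}" "p i = p j"
    show "i = j"
    proof (rule ccontr)
      assume "i \<noteq> j"
      then consider "i < j" | "j < i" by linarith
      then show False using pmono ij by cases (auto dest: pmono)
    qed
  qed
  have cP: "card P = k" using Peq card_image[OF inj] by simp
  define l where "l = map p [0..<k]"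
  have sl: "sorted_wrt (<) l"
    unfolding l_def sorted_wrt_iff_nth_less using pmono by simp
  have "set l = P" "length l = card P" using Peq cP by (auto simp: l_def)
  then have "sorted_list_of_set P = l"
    using sorted_list_of_set_unique[OF fin] sl by blast
  then show "card P = k \<and> (\<forall>i<k. sorted_list_of_set P ! i \<in> B i)"
    using cP pB by (simp add: l_def)
qed

lemma count_set_meas:
  assumes "g \<in> measurable M (count_space UNIV)"
  shows "{w\<in>space M. Q (g w)} \<in> sets M"
proof -
  have "{w\<in>space M. Q (g w)} = g -` {x. Q x} \<inter> space M" by auto
  then show ?thesis using measurable_sets[OF assms, of "{x. Q x}"] by simp
qed

lemma DD_sub: "0 \<le> t \<Longrightarrow> t < 1 \<Longrightarrow> DD m t \<subseteq> {0..<1}"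
proof -
  assume "0 \<le> t" "t < 1"
  then obtain j where j: "1 \<le> j" "j \<le> 2^m" "DD m t = dyadic m j"
    using DD_dyadic is_dyadic_def by blast
  have "real j \<le> 2^m" using j(2) by (metis of_nat_le_iff of_nat_numeral of_nat_power)
  then have "real j / 2^m \<le> 1" by simp
  moreover have "0 \<le> (real j - 1) / 2^m" using j(1) by simp
  ultimately show ?thesis using j(3) unfolding dyadic_def by auto
qed

lemma DD_measure: "measure lborel (DD m t) = 1 / 2^m" "emeasure lborel (DD m t) = ennreal (1 / 2^m)"
proof -
  define c where "c = real_of_int \<lfloor>t*2^m\<rfloor>"
  have le: "c / 2^m \<le> (c+1) / 2^m" by (simp add: divide_right_mono)
  have d: "(c+1) / 2^m - c / 2^m = 1 / 2^m" by (simp add: diff_divide_distrib[symmetric])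
  show "measure lborel (DD m t) = 1 / 2^m" unfolding DD_interval c_def[symmetric]
    using le d by (simp only: measure_lborel_Ico)
  show "emeasure lborel (DD m t) = ennreal (1 / 2^m)" unfolding DD_interval c_def[symmetric]
    using le d by (simp only: emeasure_lborel_Ico)
qed



theorem lemma5:
  fixes M :: "'a measure" and X :: "'a \<Rightarrow> real \<Rightarrow> 'e" and lam :: real
    and k :: nat and Is :: "real set list"
  assumes "prob_space M"
    and "\<forall>\<omega>\<in>space M. X \<omega> \<in> Dspace"
    and "lam > 0"
    and "poisson_pp M lam (\<lambda>\<omega>. jumps (X \<omega>))"
    and "k \<ge> 1"
    and "Is \<in> im_pi k"
  shows "distr (uniform_measure M {\<omega>\<in>space M. njumps (X \<omega>) = k \<and>
                   pi_k k (take k (jump_list (X \<omega>))) = Is})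
               (PiM {..<k} (\<lambda>_. lborel)) (\<lambda>\<omega>. \<lambda>i\<in>{..<k}. jump_list (X \<omega>) ! i)
         = PiM {..<k} (\<lambda>i. uniform_measure lborel (Is ! i))"
proof -
  interpret prob_space M by fact
  define P where "P \<omega> = jumps (X \<omega>)" for \<omega>
  have pp: "poisson_pp M lam P" using assms(4) by (simp add: P_def[abs_def])
  have Pfin: "\<And>\<omega>. \<omega> \<in> space M \<Longrightarrow> finite (P \<omega>)"
    and P01: "\<And>\<omega>. \<omega> \<in> space M \<Longrightarrow> P \<omega> \<subseteq> {0..<1}"
    using pp unfolding poisson_pp_def by auto
  have cmeas: "\<And>A. A \<in> sets borel \<Longrightarrow> A \<subseteq> {0..<1} \<Longrightarrow> (\<lambda>\<omega>. card (P \<omega> \<inter> A)) \<in> measurable M (count_space UNIV)"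
    using pp unfolding poisson_pp_def by auto
  have cprob: "\<And>A n. A \<in> sets borel \<Longrightarrow> A \<subseteq> {0..<1} \<Longrightarrow>
      prob {\<omega>\<in>space M. card (P \<omega> \<inter> A) = n} = (lam * measure lborel A) ^ n / fact n * exp (- lam * measure lborel A)"
    using pp unfolding poisson_pp_def by auto
  have cindep: "\<And>(As :: nat \<Rightarrow> real set) n. (\<forall>i<n. As i \<in> sets borel \<and> As i \<subseteq> {0..<1}) \<Longrightarrow>
        disjoint_family_on As {..<n} \<Longrightarrow>
        indep_vars (\<lambda>_. count_space UNIV) (\<lambda>i \<omega>. card (P \<omega> \<inter> As i)) {..<n}"
    using pp unfolding poisson_pp_def by auto
  have cset: "\<And>A Q. A \<in> sets borel \<Longrightarrow> A \<subseteq> {0..<1} \<Longrightarrow> {\<omega>\<in>space M. Q (card (P \<omega> \<inter> A))} \<in> sets M"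
    using cmeas count_set_meas by blast

  obtain ts where ts: "Is = pi_k k ts" "length ts = k" "distinct ts" "set ts \<subseteq> {0..<1}"
    using assms(6) unfolding im_pi_def by blast
  define tl where "tl = sorted_list_of_set (set ts)"
  have tl: "set tl = set ts" "distinct tl" "length tl = k" "sorted_wrt (<) tl"
    using ts by (auto simp: tl_def distinct_card)
  have Is_eq: "Is = map (leaf (set ts)) tl" using pi_k_eq[OF ts(4)] ts(1) by (simp add: tl_def)
  have lenIs: "length Is = k" using Is_eq tl by simp
  define II where "II i = Is ! i" for i
  have tlin: "tl ! i \<in> set ts" if "i < k" for i using tl that nth_mem[of i tl] by simp
  have tl01: "tl ! i \<in> {0..<1}" if "i < k" for i using tlin[OF that] ts(4) by blast
  have II_DD: "\<And>i. i < k \<Longrightarrow> II i = DD (lev (set ts) (tl ! i)) (tl ! i)"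
    using Is_eq tl by (simp add: II_def leaf_def)
  have II_sub: "\<And>i. i < k \<Longrightarrow> II i \<subseteq> {0..<1}"
    using II_DD tl01 DD_sub by simp
  have II_borel: "\<And>i. i < k \<Longrightarrow> II i \<in> sets borel"
    using II_DD by (simp add: DD_interval)
  have II_meas: "\<And>i. i < k \<Longrightarrow> measure lborel (II i) > 0"
    using II_DD by (simp add: DD_measure)
  have II_emeas: "\<And>i. i < k \<Longrightarrow> emeasure lborel (II i) = ennreal (measure lborel (II i))"
    using II_DD by (simp add: DD_measure)
  have II_ord: "\<And>i j a b. i < j \<Longrightarrow> j < k \<Longrightarrow> a \<in> II i \<Longrightarrow> b \<in> II j \<Longrightarrow> a < b"
  proof -
    fix i j a b assume h: "i < j" "j < k" "a \<in> II i" "b \<in> II j"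
    have "tl ! i < tl ! j" using sorted_wrt_nth_less[OF tl(4) h(1)] h tl by simp
    moreover have "tl ! i \<in> set ts" "tl ! j \<in> set ts" using tlin h by simp_all
    moreover have "a \<in> leaf (set ts) (tl ! i)" "b \<in> leaf (set ts) (tl ! j)"
      using h Is_eq tl by (simp_all add: II_def)
    ultimately show "a < b" using leaf_order_set by blast
  qed

  have EV0: "(njumps (X \<omega>) = k \<and> pi_k k (take k (jump_list (X \<omega>))) = Is) \<longleftrightarrow>
      (card (P \<omega>) = k \<and> (\<forall>i<k. sorted_list_of_set (P \<omega>) ! i \<in> II i))" if w: "\<omega> \<in> space M" for \<omega>
  proof -
    have jl: "jump_list (X \<omega>) = sorted_list_of_set (P \<omega>)" "njumps (X \<omega>) = card (P \<omega>)"
      by (simp_all add: jump_list_def njumps_def P_def)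
    show ?thesis
    proof (cases "card (P \<omega>) = k")
      case True
      then have "take k (jump_list (X \<omega>)) = sorted_list_of_set (P \<omega>)" using jl by simp
      then show ?thesis using pi_char[OF ts(4,3,2) Pfin[OF w] P01[OF w] True] jl True ts(1)
        by (simp add: II_def)
    next
      case False
      then show ?thesis using jl by simp
    qed
  qed
  define E where "E B = {\<omega>\<in>space M. (\<forall>i<k. card (P \<omega> \<inter> B i) = 1) \<and>
       card (P \<omega> \<inter> ({0..<1} - (\<Union>i<k. B i))) = 0}" for B :: "nat \<Rightarrow> real set"
  have EV: "(card (P \<omega>) = k \<and> (\<forall>i<k. sorted_list_of_set (P \<omega>) ! i \<in> B i)) \<longleftrightarrow> \<omega> \<in> E B"
    if w: "\<omega> \<in> space M" and B: "\<And>i. i < k \<Longrightarrow> B i \<subseteq> II i" for \<omega> B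
  proof -
    have ord: "\<And>i j a b. i < j \<Longrightarrow> j < k \<Longrightarrow> a \<in> B i \<Longrightarrow> b \<in> B j \<Longrightarrow> a < b"
    proof -
      fix i j a b assume h: "i < j" "j < k" "a \<in> B i" "b \<in> B j"
      have "a \<in> II i" "b \<in> II j" using h B[of i] B[of j] by auto
      then show "a < b" using II_ord h by blast
    qed
    show ?thesis using sorted_counts[OF Pfin[OF w] P01[OF w] ord] w by (simp add: E_def)
  qed
  have fin01: "emeasure lborel A \<noteq> \<infinity>" if "A \<subseteq> {0..<1}" for A :: "real set"
  proof -
    have "emeasure lborel A \<le> emeasure lborel {0..<(1::real)}" using that by (intro emeasure_mono) auto
    then show ?thesis by (auto simp: top_unique)
  qed
  have PR: "E B \<in> events \<and> prob (E B) = lam ^ k * (\<Prod>i<k. measure lborel (B i)) * exp (- lam)"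
    if Bb: "\<And>i. i < k \<Longrightarrow> B i \<in> sets borel" and BII: "\<And>i. i < k \<Longrightarrow> B i \<subseteq> II i" for B
  proof -
    define U where "U = (\<Union>i<k. B i)"
    define R where "R = {0..<1} - U"
    define As where "As i = (if i < k then B i else R)" for i
    define n where "n i = (if i < k then 1 else 0::nat)" for i
    have B01: "B i \<subseteq> {0..<1}" if "i < k" for i using BII[OF that] II_sub[OF that] by blast
    have Bdisj: "B i \<inter> B j = {}" if "i < k" "j < k" "i \<noteq> j" for i j
    proof -
      { fix x assume x: "x \<in> B i" "x \<in> B j"
        then have "x \<in> II i" "x \<in> II j" using BII that by auto
        then have False using II_ord[of i j x x] II_ord[of j i x x] that
          by (cases i j rule: linorder_cases) auto }
      then show ?thesis by blast
    qed
    have Ub: "U \<in> sets borel" using Bb unfolding U_def by auto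
    have U01: "U \<subseteq> {0..<1}" using B01 unfolding U_def by auto
    have Rb: "R \<in> sets borel" using Ub unfolding R_def by auto
    have As_b: "\<forall>i<Suc k. As i \<in> sets borel \<and> As i \<subseteq> {0..<1}"
      using Bb B01 Rb by (auto simp: As_def R_def)
    have disj: "disjoint_family_on As {..<Suc k}"
      unfolding disjoint_family_on_def
    proof (intro ballI impI)
      fix i j assume ij: "i \<in> {..<Suc k}" "j \<in> {..<Suc k}" "i \<noteq> j"
      show "As i \<inter> As j = {}"
      proof (cases "i < k \<and> j < k")
        case True then show ?thesis using Bdisj ij by (simp add: As_def)
      next
        case False
        then have "i = k \<or> j = k" using ij by auto
        then show ?thesis using ij by (auto simp: As_def R_def U_def)
      qed
    qed
    have ind: "indep_sets (\<lambda>i. {(\<lambda>\<omega>. card (P \<omega> \<inter> As i)) -` A \<inter> space M | A. A \<in> sets (count_space UNIV)}) {..<Suc k}"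
      using cindep[OF As_b disj] by (simp add: indep_vars_def2)
    define F where "F i = (\<lambda>\<omega>. card (P \<omega> \<inter> As i)) -` {n i} \<inter> space M" for i
    have Feq: "F i = {\<omega>\<in>space M. card (P \<omega> \<inter> As i) = n i}" for i by (auto simp: F_def)
    have EB: "E B = (\<Inter>i\<in>{..<Suc k}. F i)"
    proof (rule set_eqI)
      fix \<omega>
      have "\<omega> \<in> (\<Inter>i\<in>{..<Suc k}. F i) \<longleftrightarrow> \<omega> \<in> space M \<and> (\<forall>i<Suc k. card (P \<omega> \<inter> As i) = n i)"
        by (auto simp: F_def)
      also have "\<dots> \<longleftrightarrow> \<omega> \<in> E B"
        unfolding All_less_Suc by (simp add: As_def n_def R_def U_def E_def conj_commute cong: conj_cong)
      finally show "\<omega> \<in> E B \<longleftrightarrow> \<omega> \<in> (\<Inter>i\<in>{..<Suc k}. F i)" by simp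
    qed
    have Fev: "F i \<in> events" if "i < Suc k" for i
      unfolding Feq using As_b that by (intro cset) auto
    have "E B \<in> events" unfolding EB using Fev by auto
    have "prob (E B) = (\<Prod>i\<in>{..<Suc k}. prob (F i))"
      unfolding EB by (rule indep_setsD[OF ind]) (auto simp: F_def)
    also have "\<dots> = (\<Prod>i<k. prob (F i)) * prob (F k)" by simp
    also have "(\<Prod>i<k. prob (F i)) = (\<Prod>i<k. lam * measure lborel (B i) * exp (- lam * measure lborel (B i)))"
    proof (rule prod.cong)
      fix i assume "i \<in> {..<k}"
      then show "prob (F i) = lam * measure lborel (B i) * exp (- lam * measure lborel (B i))"
        using cprob[of "B i" 1] Bb[of i] B01[of i] by (simp add: Feq As_def n_def)
    qed simp
    also have "prob (F k) = exp (- lam * measure lborel R)"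
      using cprob[of R 0] Rb by (simp add: Feq As_def n_def R_def)
    also have "measure lborel R = 1 - (\<Sum>i<k. measure lborel (B i))"
    proof -
      have "measure lborel R = measure lborel {0..<(1::real)} - measure lborel U"
        unfolding R_def by (rule measure_Diff) (use Ub U01 in auto)
      moreover have "measure lborel U = (\<Sum>i<k. measure lborel (B i))"
        unfolding U_def by (rule measure_finite_Union) (use Bb Bdisj fin01 B01 in \<open>auto simp: disjoint_family_on_def\<close>)
      ultimately show ?thesis by simp
    qed
    also have "(\<Prod>i<k. lam * measure lborel (B i) * exp (- lam * measure lborel (B i))) * exp (- lam * (1 - (\<Sum>i<k. measure lborel (B i))))
        = lam ^ k * (\<Prod>i<k. measure lborel (B i)) * exp (- lam)"
    proof -
      have "(\<Prod>i<k. lam * measure lborel (B i) * exp (- lam * measure lborel (B i)))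
          = lam ^ k * (\<Prod>i<k. measure lborel (B i)) * (\<Prod>i<k. exp (- lam * measure lborel (B i)))"
        by (simp add: prod.distrib)
      also have "(\<Prod>i<k. exp (- lam * measure lborel (B i))) = exp (\<Sum>i<k. - lam * measure lborel (B i))"
        by (simp add: exp_sum)
      finally have "(\<Prod>i<k. lam * measure lborel (B i) * exp (- lam * measure lborel (B i)))
          = lam ^ k * (\<Prod>i<k. measure lborel (B i)) * exp (- lam * (\<Sum>i<k. measure lborel (B i)))"
        by (simp add: sum_distrib_left)
      then show ?thesis by (simp add: mult.assoc exp_add[symmetric] algebra_simps)
    qed
    finally show ?thesis using \<open>E B \<in> events\<close> by simp
  qed
  define C where "C = {\<omega>\<in>space M. njumps (X \<omega>) = k \<and> pi_k k (take k (jump_list (X \<omega>))) = Is}"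
  have C_E: "C = E II"
  proof (rule set_eqI)
    fix \<omega>
    show "\<omega> \<in> C \<longleftrightarrow> \<omega> \<in> E II"
    proof (cases "\<omega> \<in> space M")
      case True
      then show ?thesis using EV0[OF True] EV[OF True, of II] by (simp add: C_def)
    next
      case False
      then show ?thesis by (simp add: C_def E_def)
    qed
  qed
  have PRII: "C \<in> events" "prob C = lam ^ k * (\<Prod>i<k. measure lborel (II i)) * exp (- lam)"
    using PR[of II] II_borel unfolding C_E by auto
  have probC_pos: "lam ^ k * (\<Prod>i<k. measure lborel (II i)) * exp (- lam) > 0"
  proof -
    have "(\<Prod>i<k. measure lborel (II i)) > 0" by (rule prod_pos) (use II_meas in auto)
    then show ?thesis using assms(3) by simp
  qed

  have Ymeas: "(\<lambda>\<omega>. jump_list (X \<omega>) ! i) \<in> borel_measurable M" for i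
  proof (rule borel_measurableI_le)
    fix a :: real
    define G where "G n = {\<omega>\<in>space M. card (P \<omega> \<inter> {0..<1}) = n} \<inter>
        (if i < n then {\<omega>\<in>space M. Suc i \<le> card (P \<omega> \<inter> ({0..<1} \<inter> {..a}))}
         else (if [] ! (i - n) \<le> a then space M else {}))" for n
    have Gm: "G n \<in> sets M" for n
    proof -
      have "{\<omega>\<in>space M. card (P \<omega> \<inter> {0..<1}) = n} \<in> sets M" by (rule cset) auto
      moreover have "{\<omega>\<in>space M. Suc i \<le> card (P \<omega> \<inter> ({0..<1} \<inter> {..a}))} \<in> sets M" by (rule cset) auto
      ultimately show ?thesis unfolding G_def by auto
    qed
    have "{\<omega>\<in>space M. jump_list (X \<omega>) ! i \<le> a} = (\<Union>n. G n)"
    proof (rule set_eqI)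
      fix \<omega>
      show "\<omega> \<in> {\<omega>\<in>space M. jump_list (X \<omega>) ! i \<le> a} \<longleftrightarrow> \<omega> \<in> (\<Union>n. G n)"
      proof (cases "\<omega> \<in> space M")
        case False
        have "G n \<subseteq> space M" for n by (auto simp: G_def)
        then show ?thesis using False by blast
      next
        case True
        have e1: "P \<omega> \<inter> {0..<1} = P \<omega>" using P01[OF True] by blast
        have e2: "P \<omega> \<inter> ({0..<1} \<inter> {..a}) = P \<omega> \<inter> {..a}" using P01[OF True] by blast
        have jl: "jump_list (X \<omega>) = sorted_list_of_set (P \<omega>)" by (simp add: jump_list_def P_def)
        have len: "length (sorted_list_of_set (P \<omega>)) = card (P \<omega>)" by simp
        have "\<omega> \<in> (\<Union>n. G n) \<longleftrightarrow> \<omega> \<in> G (card (P \<omega>))"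
        proof
          assume "\<omega> \<in> (\<Union>n. G n)"
          then obtain n where n: "\<omega> \<in> G n" by blast
          then have "n = card (P \<omega>)" using e1 by (simp add: G_def)
          then show "\<omega> \<in> G (card (P \<omega>))" using n by simp
        qed blast
        also have "\<dots> \<longleftrightarrow> (if i < card (P \<omega>) then Suc i \<le> card (P \<omega> \<inter> {..a}) else [] ! (i - card (P \<omega>)) \<le> a)"
          using True e1 e2 by (simp add: G_def)
        also have "\<dots> \<longleftrightarrow> jump_list (X \<omega>) ! i \<le> a"
        proof (cases "i < card (P \<omega>)")
          case True
          then show ?thesis using sorted_nth_le_iff[OF Pfin[OF \<open>\<omega> \<in> space M\<close>] True, of a] jl by simp
        next
          case False
          then show ?thesis using nth_beyond[of "sorted_list_of_set (P \<omega>)" i] len jl by simp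
        qed
        finally show ?thesis using True by simp
      qed
    qed
    moreover have "(\<Union>n. G n) \<in> sets M" using Gm by auto
    ultimately show "{\<omega>\<in>space M. jump_list (X \<omega>) ! i \<le> a} \<in> sets M" by simp
  qed
  let ?N = "PiM {..<k} (\<lambda>_. lborel) :: (nat \<Rightarrow> real) measure"
  define f where "f \<omega> = (\<lambda>i\<in>{..<k}. jump_list (X \<omega>) ! i)" for \<omega>
  have fM: "f \<in> measurable M ?N" unfolding f_def
    by (rule measurable_restrict) (simp add: Ymeas)
  define Mc where "Mc = uniform_measure M C"
  have fMc: "f \<in> measurable Mc ?N" using fM unfolding Mc_def
    by (simp add: measurable_cong_sets[OF sets_uniform_measure refl])
  define J where "J i = (if i < k then II i else {0..<1})" for i
  define MM where "MM i = uniform_measure lborel (J i)" for i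
  have J_b: "J i \<in> sets borel" for i using II_borel by (simp add: J_def)
  have J_pos: "emeasure lborel (J i) \<noteq> 0" "emeasure lborel (J i) \<noteq> \<infinity>" for i
  proof -
    show "emeasure lborel (J i) \<noteq> 0"
    proof (cases "i < k")
      case True then show ?thesis using II_meas[OF True] II_emeas[OF True] by (simp add: J_def)
    qed (simp add: J_def)
    show "emeasure lborel (J i) \<noteq> \<infinity>"
    proof (cases "i < k")
      case True then show ?thesis using II_emeas[OF True] by (simp add: J_def)
    qed (simp add: J_def)
  qed
  interpret PS: product_sigma_finite MM
    unfolding product_sigma_finite_def MM_def
    using prob_space_imp_sigma_finite[OF prob_space_uniform_measure[OF J_pos]] by blast
  have cong: "PiM {..<k} (\<lambda>i. uniform_measure lborel (Is ! i)) = PiM {..<k} MM"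
    by (rule PiM_cong) (auto simp: MM_def J_def II_def)
  have "distr Mc ?N f = PiM {..<k} MM"
  proof (rule PS.PiM_eqI)
    show "finite {..<k}" by simp
    show "sets (distr Mc ?N f) = sets (PiM {..<k} MM)"
      by (simp, rule sets_PiM_cong) (auto simp: MM_def)
    fix A assume A: "\<And>i. i \<in> {..<k} \<Longrightarrow> A i \<in> sets (MM i)"
    have Ab: "A i \<in> sets borel" if "i < k" for i using A[of i] that by (simp add: MM_def)
    have PiE_sets: "Pi\<^sub>E {..<k} A \<in> sets ?N" by (rule sets_PiM_I_finite) (use Ab in auto)
    have pre: "f -` Pi\<^sub>E {..<k} A \<inter> space M \<in> sets M" using measurable_sets[OF fM PiE_sets] .
    define B where "B i = A i \<inter> II i" for i
    have Bb: "B i \<in> sets borel" if "i < k" for i using Ab II_borel that by (simp add: B_def)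
    have Cpre: "C \<inter> (f -` Pi\<^sub>E {..<k} A \<inter> space M) = E B"
    proof (rule set_eqI)
      fix \<omega>
      show "\<omega> \<in> C \<inter> (f -` Pi\<^sub>E {..<k} A \<inter> space M) \<longleftrightarrow> \<omega> \<in> E B"
      proof (cases "\<omega> \<in> space M")
        case False then show ?thesis by (simp add: C_def E_def)
      next
        case True
        have jl: "jump_list (X \<omega>) = sorted_list_of_set (P \<omega>)" by (simp add: jump_list_def P_def)
        have "f \<omega> \<in> Pi\<^sub>E {..<k} A \<longleftrightarrow> (\<forall>i<k. jump_list (X \<omega>) ! i \<in> A i)"
          by (auto simp: f_def PiE_iff)
        then have "\<omega> \<in> C \<inter> (f -` Pi\<^sub>E {..<k} A \<inter> space M) \<longleftrightarrow>
            (card (P \<omega>) = k \<and> (\<forall>i<k. sorted_list_of_set (P \<omega>) ! i \<in> II i)) \<and> (\<forall>i<k. sorted_list_of_set (P \<omega>) ! i \<in> A i)"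
          using EV0[OF True] True jl by (auto simp: C_def)
        also have "\<dots> \<longleftrightarrow> (card (P \<omega>) = k \<and> (\<forall>i<k. sorted_list_of_set (P \<omega>) ! i \<in> B i))"
          by (auto simp: B_def)
        also have "\<dots> \<longleftrightarrow> \<omega> \<in> E B" by (rule EV[OF True]) (simp add: B_def)
        finally show ?thesis .
      qed
    qed
    have PRB: "E B \<in> events" "prob (E B) = lam ^ k * (\<Prod>i<k. measure lborel (B i)) * exp (- lam)"
      using PR[of B] Bb by (auto simp: B_def)
    have "emeasure (distr Mc ?N f) (Pi\<^sub>E {..<k} A) = emeasure Mc (f -` Pi\<^sub>E {..<k} A \<inter> space Mc)"
      by (rule emeasure_distr[OF fMc PiE_sets])
    also have "\<dots> = emeasure M (C \<inter> (f -` Pi\<^sub>E {..<k} A \<inter> space M)) / emeasure M C"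
      unfolding Mc_def using PRII(1) pre by simp
    also have "\<dots> = ennreal (prob (E B)) / ennreal (prob C)"
      unfolding Cpre by (simp add: emeasure_eq_measure)
    also have "\<dots> = ennreal (prob (E B) / prob C)"
      using PRII(2) probC_pos by (intro divide_ennreal) auto
    also have "prob (E B) / prob C = (\<Prod>i<k. measure lborel (B i) / measure lborel (II i))"
    proof -
      have "prob (E B) / prob C = (\<Prod>i<k. measure lborel (B i)) / (\<Prod>i<k. measure lborel (II i))"
        unfolding PRB(2) PRII(2) using assms(3) by simp
      then show ?thesis by (simp add: prod_dividef)
    qed
    also have "ennreal (\<Prod>i<k. measure lborel (B i) / measure lborel (II i)) = (\<Prod>i<k. ennreal (measure lborel (B i) / measure lborel (II i)))"
      by (rule prod_ennreal[symmetric]) simp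
    also have "\<dots> = (\<Prod>i\<in>{..<k}. emeasure (MM i) (A i))"
    proof (rule prod.cong)
      fix i assume i: "i \<in> {..<k}"
      then have ik: "i < k" by simp
      have "emeasure (MM i) (A i) = emeasure lborel (II i \<inter> A i) / emeasure lborel (II i)"
        using emeasure_uniform_measure[of "II i" lborel "A i"] Ab[OF ik] II_borel[OF ik] ik by (simp add: MM_def J_def)
      also have "emeasure lborel (II i \<inter> A i) = ennreal (measure lborel (B i))"
      proof -
        have "emeasure lborel (B i) \<noteq> \<infinity>" using fin01[of "B i"] II_sub[OF ik] by (auto simp: B_def)
        then show ?thesis using emeasure_eq_ennreal_measure[of lborel "B i"] by (simp add: B_def Int_commute)
      qed
      also have "emeasure lborel (II i) = ennreal (measure lborel (II i))" using II_emeas[OF ik] .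
      also have "ennreal (measure lborel (B i)) / ennreal (measure lborel (II i)) = ennreal (measure lborel (B i) / measure lborel (II i))"
        using II_meas[OF ik] by (intro divide_ennreal) auto
      finally show "ennreal (measure lborel (B i) / measure lborel (II i)) = emeasure (MM i) (A i)" by simp
    qed simp
    finally show "emeasure (distr Mc ?N f) (Pi\<^sub>E {..<k} A) = (\<Prod>i\<in>{..<k}. emeasure (MM i) (A i))" .
  qed
  then show ?thesis using cong unfolding Mc_def C_def f_def[abs_def] by simp
qed
end
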